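(* Let $T\subset\mathbb{R}^3$ be the tetrahedron with vertices $(0,0,0)$, $\left(\frac12,0,0\right)$, $\left(0,2+\sqrt2,0\right)$ and $\left(0,0,2-\sqrt2\right)$. Then for every positive integer $t$, \[ \#(tT\cap\mathbb{Z}^3)=\frac16t^3+t^2+\frac{11}{6}t+1. \] *)

theory Defs
  imports "HOL-Analysis.Analysis"
begin

definition tetT :: "(real ^ 3) set" where
  "tetT = convex hull {vector [0, 0, 0], vector [1/2, 0, 0],
                       vector [0, 2 + sqrt 2, 0], vector [0, 0, 2 - sqrt 2]}"

definition lattice_pt :: "int \<times> int \<times> int \<Rightarrow> real ^ 3" where
  "lattice_pt p = (case p of (a, b, c) \<Rightarrow> vector [real_of_int a, real_of_int b, real_of_int c])"

end

theory Submission
  imports Defs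
begin

definition ca :: real where "ca = 1 - sqrt 2 / 2"
definition cb :: real where "cb = 1 + sqrt 2 / 2"

lemma sq2: "sqrt 2 * sqrt 2 = (2::real)" by simp

lemma ca_cb: "ca + cb = 2" unfolding ca_def cb_def by simp
lemma ca_pos: "ca \<ge> 1/4"
proof -
  have "sqrt 2 \<le> 3/2" by (rule real_le_lsqrt) (auto simp: power2_eq_square)
  thus ?thesis unfolding ca_def by simp
qed
lemma cb_pos: "cb \<ge> 1" unfolding cb_def by simp

lemma v2: "ca * (2 + sqrt 2) = 1" unfolding ca_def by (simp add: field_simps)
lemma v3: "cb * (2 - sqrt 2) = 1" unfolding cb_def by (simp add: field_simps)

lemma tet_char: "tetT = {v. 0 \<le> v$1 \<and> 0 \<le> v$2 \<and> 0 \<le> v$3 \<and> 2* v$1 + ca* v$2 + cb* v$3 \<le> 1}"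
  (is "_ = ?S")
proof
  have cvx: "convex ?S"
    unfolding convex_def
  proof (intro ballI allI impI)
    fix x y :: "real^3" and u w :: real
    assume x: "x \<in> ?S" and y: "y \<in> ?S" and uv: "0 \<le> u" "0 \<le> w" "u + w = 1"
    have "u * (2*x$1 + ca*x$2 + cb*x$3) \<le> u * 1" using x uv by (intro mult_left_mono) auto
    moreover have "w * (2*y$1 + ca*y$2 + cb*y$3) \<le> w * 1" using y uv by (intro mult_left_mono) auto
    ultimately have "2*(u*x$1+w*y$1) + ca*(u*x$2+w*y$2) + cb*(u*x$3+w*y$3) \<le> 1"
      using uv by (simp add: algebra_simps)
    then show "u *\<^sub>R x + w *\<^sub>R y \<in> ?S" using x y uv by simp
  qed
  have s2: "sqrt 2 \<le> 2" by (rule real_le_lsqrt) (auto simp: power2_eq_square)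
  have "{vector [0, 0, 0], vector [1/2, 0, 0], vector [0, 2 + sqrt 2, 0], vector [0, 0, 2 - sqrt 2]} \<subseteq> ?S"
    using s2 v2 v3 by auto
  then show "tetT \<subseteq> ?S" unfolding tetT_def using cvx by (rule hull_minimal)
next
  show "?S \<subseteq> tetT"
  proof
    fix v :: "real^3" assume v: "v \<in> ?S"
    define P :: "nat \<Rightarrow> real^3" where "P i = (if i = 0 then vector [0,0,0] else if i = 1 then vector [1/2,0,0]
       else if i = 2 then vector [0, 2 + sqrt 2, 0] else vector [0, 0, 2 - sqrt 2])" for i
    define L :: "nat \<Rightarrow> real" where "L i = (if i = 0 then 1 - (2* v$1 + ca* v$2 + cb* v$3) else if i = 1 then 2 * v$1
       else if i = 2 then ca * v$2 else cb * v$3)" for i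
    have hm: "(\<Sum>j\<in>{0,1,2,3::nat}. L j *\<^sub>R P j) \<in> tetT"
      unfolding tetT_def
    proof (rule convex_sum)
      show "(\<Sum>i\<in>{0,1,2,3::nat}. L i) = 1" by (simp add: L_def)
      show "\<And>i. i \<in> {0,1,2,3} \<Longrightarrow> 0 \<le> L i" using v ca_pos cb_pos by (auto simp: L_def)
      show "\<And>i. i \<in> {0,1,2,3} \<Longrightarrow> P i \<in> convex hull {vector [0, 0, 0], vector [1/2, 0, 0],
                       vector [0, 2 + sqrt 2, 0], vector [0, 0, 2 - sqrt 2]}" by (auto simp: P_def intro: hull_inc)
    qed auto
    have eqv: "(\<Sum>j\<in>{0,1,2,3::nat}. L j *\<^sub>R P j) = v"
    proof -
      have e2: "ca * v$2 * (2 + sqrt 2) = v$2" using v2 by (metis mult.commute mult.left_commute mult_1)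
      have e3: "cb * v$3 * (2 - sqrt 2) = v$3" using v3 by (metis mult.commute mult.left_commute mult_1)
      show ?thesis unfolding vec_eq_iff forall_3 using e2 e3 by (simp add: L_def P_def)
    qed
    show "v \<in> tetT" using hm unfolding eqv .
  qed
qed

lemma no_sqrt2_nat: "(k::nat)^2 = 2*m^2 \<Longrightarrow> m = 0"
proof (induction m arbitrary: k rule: less_induct)
  case (less m)
  show ?case
  proof (rule ccontr)
    assume m0: "m \<noteq> 0"
    have "even (k^2)" using less.prems by simp
    then have "even k" by simp
    then obtain k' where k': "k = 2*k'" by blast
    have "m^2 = 2*k'^2" using less.prems k' by (simp add: power2_eq_square)
    then have "even (m^2)" by simp
    then have "even m" by simp
    then obtain m' where m': "m = 2*m'" by blast
    have "k'^2 = 2*m'^2" using \<open>m^2 = 2*k'^2\<close> m' by (simp add: power2_eq_square)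
    moreover have "m' < m" using m' m0 by simp
    ultimately have "m' = 0" using less.IH by blast
    then show False using m' m0 by simp
  qed
qed

lemma irr: assumes "m \<noteq> 0" shows "real_of_int m * sqrt 2 \<noteq> real_of_int k"
proof
  assume h: "real_of_int m * sqrt 2 = real_of_int k"
  then have "(real_of_int m * sqrt 2)^2 = (real_of_int k)^2" by simp
  then have "real_of_int (2 * m^2) = real_of_int (k^2)" by (simp add: power_mult_distrib)
  then have "2 * m^2 = k^2" by linarith
  then have "2 * (nat \<bar>m\<bar>)^2 = (nat \<bar>k\<bar>)^2"
  proof -
    have "int (2 * (nat \<bar>m\<bar>)^2) = int ((nat \<bar>k\<bar>)^2)" using \<open>2 * m^2 = k^2\<close> by simp
    then show ?thesis by (simp only: of_nat_eq_iff)
  qed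
  then have "nat \<bar>m\<bar> = 0" using no_sqrt2_nat by metis
  then show False using assms by simp
qed

lemma floor_sum: assumes "m \<ge> 1"
  shows "\<lfloor>real_of_int m * (2 - sqrt 2)\<rfloor> + \<lfloor>real_of_int m * (2 + sqrt 2)\<rfloor> = 4*m - 1"
proof -
  define s where "s = real_of_int m * sqrt 2"
  define f where "f = \<lfloor>s\<rfloor>"
  have "s \<noteq> real_of_int f" unfolding s_def using irr assms by simp
  then have fs: "real_of_int f < s" "s < real_of_int f + 1" unfolding f_def by linarith+
  have "\<lfloor>real_of_int m * (2 - sqrt 2)\<rfloor> = 2*m - f - 1"
    unfolding floor_eq_iff using fs by (simp add: s_def algebra_simps)
  moreover have "\<lfloor>real_of_int m * (2 + sqrt 2)\<rfloor> = 2*m + f"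
    unfolding floor_eq_iff using fs by (simp add: s_def algebra_simps)
  ultimately show ?thesis by simp
qed

lemma cb_iff: "cb * r \<le> real_of_int m \<longleftrightarrow> r \<le> real_of_int m * (2 - sqrt 2)"
proof -
  have p: "2 - sqrt 2 > 0"
  proof -
    have "sqrt 2 < 2" by (rule real_less_lsqrt) (auto simp: power2_eq_square)
    thus ?thesis by simp
  qed
  have "cb * r \<le> real_of_int m \<longleftrightarrow> cb * r * (2 - sqrt 2) \<le> real_of_int m * (2 - sqrt 2)"
    using p by simp
  also have "cb * r * (2 - sqrt 2) = r" using v3 by (metis mult.commute mult.left_commute mult_1)
  finally show ?thesis .
qed

lemma ca_iff: "ca * r \<le> real_of_int m \<longleftrightarrow> r \<le> real_of_int m * (2 + sqrt 2)"
proof -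
  have p: "2 + sqrt 2 > 0" using real_sqrt_ge_zero[of 2] by linarith
  have "ca * r \<le> real_of_int m \<longleftrightarrow> ca * r * (2 + sqrt 2) \<le> real_of_int m * (2 + sqrt 2)"
    using p by simp
  also have "ca * r * (2 + sqrt 2) = r" using v2 by (metis mult.commute mult.left_commute mult_1)
  finally show ?thesis .
qed

definition A2 :: "int \<Rightarrow> (int \<times> int) set" where
  "A2 m = {(y,z). 0 \<le> y \<and> 0 \<le> z \<and> ca * real_of_int y + cb * real_of_int z \<le> real_of_int m}"

definition B :: "int \<Rightarrow> (int \<times> int) set" where
  "B m = {p \<in> A2 m. fst p = 0 \<or> snd p = 0}"

lemma A2_sub: "A2 m \<subseteq> {0..4*m} \<times> {0..4*m}"
proof
  fix p assume "p \<in> A2 m"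
  then obtain y z where p: "p = (y,z)" "0 \<le> y" "0 \<le> z" "ca * real_of_int y + cb * real_of_int z \<le> real_of_int m"
    unfolding A2_def by auto
  have "(1/4) * real_of_int y \<le> ca * real_of_int y" using ca_pos p(2) by (intro mult_right_mono) auto
  moreover have "1 * real_of_int z \<le> cb * real_of_int z" using cb_pos p(3) by (intro mult_right_mono) auto
  ultimately have "real_of_int y \<le> 4 * real_of_int m" "real_of_int z \<le> 4 * real_of_int m" using p by linarith+
  then show "p \<in> {0..4*m} \<times> {0..4*m}" using p by simp
qed

lemma A2_fin: "finite (A2 m)" using A2_sub by (rule finite_subset) simp

lemma A2_neg: "m < 0 \<Longrightarrow> A2 m = {}"
  using A2_sub[of m] by fastforce

lemma A2_split: "A2 m = B m \<union> (\<lambda>(y,z). (y+1,z+1)) ` A2 (m-2)"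
proof (intro equalityI subsetI)
  fix p assume p: "p \<in> A2 m"
  show "p \<in> B m \<union> (\<lambda>(y,z). (y+1,z+1)) ` A2 (m-2)"
  proof (cases "fst p = 0 \<or> snd p = 0")
    case True then show ?thesis using p unfolding B_def by auto
  next
    case False
    obtain y z where yz: "p = (y,z)" by force
    have e: "ca * (real_of_int y - 1) + cb * (real_of_int z - 1) = ca * real_of_int y + cb * real_of_int z - 2"
      using ca_cb by (simp add: algebra_simps)
    have "(y-1, z-1) \<in> A2 (m-2)" using p False unfolding A2_def yz by (simp add: e)
    moreover have "p = (\<lambda>(y,z). (y+1,z+1)) (y-1,z-1)" using yz by simp
    ultimately show ?thesis by blast
  qed
next
  fix p assume "p \<in> B m \<union> (\<lambda>(y,z). (y+1,z+1)) ` A2 (m-2)"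
  then show "p \<in> A2 m"
  proof
    assume "p \<in> B m" then show ?thesis unfolding B_def by simp
  next
    assume "p \<in> (\<lambda>(y,z). (y+1,z+1)) ` A2 (m-2)"
    then obtain y z where "(y,z) \<in> A2 (m-2)" "p = (y+1,z+1)" by auto
    moreover have e: "ca * (real_of_int y + 1) + cb * (real_of_int z + 1) = ca * real_of_int y + cb * real_of_int z + 2"
      using ca_cb by (simp add: algebra_simps)
    ultimately show ?thesis unfolding A2_def by (simp add: e)
  qed
qed

lemma card_A2_step: "card (A2 m) = card (B m) + card (A2 (m-2))"
proof -
  have "B m \<inter> (\<lambda>(y,z). (y+1,z+1)) ` A2 (m-2) = {}"
    unfolding B_def A2_def by auto
  moreover have "inj_on (\<lambda>(y::int,z::int). (y+1,z+1)) (A2 (m-2))" by (auto simp: inj_on_def)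
  moreover have "finite (B m)" using A2_fin[of m] unfolding B_def by simp
  ultimately show ?thesis
    by (subst A2_split) (simp add: card_Un_disjoint A2_fin card_image)
qed

lemma B_eq: assumes "m \<ge> 0"
  shows "B m = ({0} \<times> {0..\<lfloor>real_of_int m * (2 - sqrt 2)\<rfloor>}) \<union> ({1..\<lfloor>real_of_int m * (2 + sqrt 2)\<rfloor>} \<times> {0})"
proof (intro equalityI subsetI)
  fix p assume p: "p \<in> B m"
  obtain y z where yz: "p = (y,z)" by force
  have ca0: "ca \<ge> 0" and cb0: "cb \<ge> 0" using ca_pos cb_pos by auto
  have h: "0 \<le> y" "0 \<le> z" "ca * real_of_int y + cb * real_of_int z \<le> real_of_int m" "y = 0 \<or> z = 0"
    using p unfolding B_def A2_def yz by auto
  show "p \<in> ({0} \<times> {0..\<lfloor>real_of_int m * (2 - sqrt 2)\<rfloor>}) \<union> ({1..\<lfloor>real_of_int m * (2 + sqrt 2)\<rfloor>} \<times> {0})"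
  proof (cases "y = 0")
    case True
    then have "cb * real_of_int z \<le> real_of_int m" using h by simp
    then have "real_of_int z \<le> real_of_int m * (2 - sqrt 2)" using cb_iff by blast
    then show ?thesis using True h yz by (simp add: le_floor_iff)
  next
    case False
    then have "z = 0" "y \<ge> 1" using h by auto
    then have "ca * real_of_int y \<le> real_of_int m" using h by simp
    then have "real_of_int y \<le> real_of_int m * (2 + sqrt 2)" using ca_iff by blast
    then show ?thesis using \<open>z = 0\<close> \<open>y \<ge> 1\<close> yz by (simp add: le_floor_iff)
  qed
next
  fix p assume p: "p \<in> ({0} \<times> {0..\<lfloor>real_of_int m * (2 - sqrt 2)\<rfloor>}) \<union> ({1..\<lfloor>real_of_int m * (2 + sqrt 2)\<rfloor>} \<times> {0})"
  obtain y z where yz: "p = (y,z)" by force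
  show "p \<in> B m"
  proof (cases "y = 0")
    case True
    then have "0 \<le> z" "real_of_int z \<le> real_of_int m * (2 - sqrt 2)" using p yz by (auto simp: le_floor_iff)
    then have "cb * real_of_int z \<le> real_of_int m" using cb_iff by blast
    then show ?thesis using True \<open>0 \<le> z\<close> yz unfolding B_def A2_def by simp
  next
    case False
    then have "z = 0" "1 \<le> y" "real_of_int y \<le> real_of_int m * (2 + sqrt 2)" using p yz by (auto simp: le_floor_iff)
    then have "ca * real_of_int y \<le> real_of_int m" using ca_iff by blast
    then show ?thesis using \<open>z = 0\<close> \<open>1 \<le> y\<close> yz unfolding B_def A2_def by simp
  qed
qed

lemma card_B_gen: assumes "m \<ge> 0"
  shows "card (B m) = nat (\<lfloor>real_of_int m * (2 - sqrt 2)\<rfloor> + 1) + nat \<lfloor>real_of_int m * (2 + sqrt 2)\<rfloor>"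
proof -
  have "({0::int} \<times> {0..\<lfloor>real_of_int m * (2 - sqrt 2)\<rfloor>}) \<inter> ({1..\<lfloor>real_of_int m * (2 + sqrt 2)\<rfloor>} \<times> {0}) = {}"
    by auto
  then show ?thesis unfolding B_eq[OF assms]
    by (simp add: card_Un_disjoint card_cartesian_product)
qed

lemma card_B0: "card (B 0) = 1" using card_B_gen[of 0] by simp

lemma card_B1: assumes "m \<ge> 1" shows "card (B m) = nat (4*m)"
proof -
  have s2: "sqrt 2 \<le> 2" by (rule real_le_lsqrt) (auto simp: power2_eq_square)
  have "0 \<le> real_of_int m * (2 - sqrt 2)" using assms s2 by simp
  then have a: "0 \<le> \<lfloor>real_of_int m * (2 - sqrt 2)\<rfloor>" by simp
  have "0 \<le> real_of_int m * (2 + sqrt 2)" using assms by simp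
  then have b: "0 \<le> \<lfloor>real_of_int m * (2 + sqrt 2)\<rfloor>" by simp
  have "int (card (B m)) = \<lfloor>real_of_int m * (2 - sqrt 2)\<rfloor> + 1 + \<lfloor>real_of_int m * (2 + sqrt 2)\<rfloor>"
    using card_B_gen[of m] assms a b by simp
  also have "\<dots> = 4 * m" using floor_sum[OF assms] by simp
  finally show ?thesis by simp
qed

lemma card_A2: "card (A2 (int n)) = (n+1)^2"
proof (induction n rule: less_induct)
  case (less n)
  have s: "card (A2 (int n)) = card (B (int n)) + card (A2 (int n - 2))" by (rule card_A2_step)
  show ?case
  proof (cases "n \<ge> 2")
    case True
    have "int n - 2 = int (n - 2)" using True by simp
    then have "card (A2 (int n - 2)) = (n - 2 + 1)^2" using less.IH[of "n-2"] True by simp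
    moreover have "card (B (int n)) = 4 * n" using card_B1[of "int n"] True by simp
    ultimately have "card (A2 (int n)) = 4*n + (n-1)^2" using s True by (simp add: Suc_diff_Suc numeral_2_eq_2)
    moreover have "4*n + (n-1)^2 = (n+1)^2" using True
      by (cases n) (auto simp: power2_eq_square algebra_simps)
    ultimately show ?thesis by simp
  next
    case False
    then have "n = 0 \<or> n = 1" by auto
    then show ?thesis
    proof
      assume "n = 0" then show ?thesis using s card_B0 A2_neg[of "-2"] by simp
    next
      assume "n = 1" then show ?thesis using s card_B1[of 1] A2_neg[of "-1"] by (simp add: power2_eq_square)
    qed
  qed
qed

definition A3 :: "int \<Rightarrow> (int \<times> int \<times> int) set" where
  "A3 m = {(x,y,z). 0 \<le> x \<and> (y,z) \<in> A2 (m - 2*x)}"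

lemma A2_mono: "m' \<le> m \<Longrightarrow> A2 m' \<subseteq> A2 m"
  unfolding A2_def by auto

lemma A3_sub: "A3 m \<subseteq> {0..m} \<times> A2 m"
proof
  fix p assume p: "p \<in> A3 m"
  obtain x y z where xyz: "p = (x,y,z)" by (cases p) auto
  have h: "0 \<le> x" "(y,z) \<in> A2 (m - 2*x)" using p unfolding A3_def xyz by auto
  have "m - 2*x \<ge> 0"
  proof (rule ccontr)
    assume "\<not> m - 2*x \<ge> 0"
    then have "A2 (m - 2*x) = {}" by (simp add: A2_neg)
    with h(2) show False by simp
  qed
  then have "x \<le> m" using h by simp
  moreover have "(y,z) \<in> A2 m" using h A2_mono[of "m - 2*x" m] by auto
  ultimately show "p \<in> {0..m} \<times> A2 m" using h xyz by simp
qed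

lemma A3_fin: "finite (A3 m)"
  using A3_sub by (rule finite_subset) (simp add: A2_fin)

lemma A3_neg: "m < 0 \<Longrightarrow> A3 m = {}"
  using A3_sub[of m] A2_neg[of m] by auto

lemma A3_split: "A3 m = (\<lambda>(y,z). (0,y,z)) ` A2 m \<union> (\<lambda>(x,y,z). (x+1,y,z)) ` A3 (m-2)"
proof (intro equalityI subsetI)
  fix p assume p: "p \<in> A3 m"
  obtain x y z where xyz: "p = (x,y,z)" by (cases p) auto
  have h: "0 \<le> x" "(y,z) \<in> A2 (m - 2*x)" using p unfolding A3_def xyz by auto
  show "p \<in> (\<lambda>(y,z). (0,y,z)) ` A2 m \<union> (\<lambda>(x,y,z). (x+1,y,z)) ` A3 (m-2)"
  proof (cases "x = 0")
    case True then show ?thesis using h xyz by force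
  next
    case False
    have "m - 2 - 2*(x-1) = m - 2*x" by simp
    then have "(x-1,y,z) \<in> A3 (m-2)" using h False unfolding A3_def by simp
    moreover have "p = (\<lambda>(x,y,z). (x+1,y,z)) (x-1,y,z)" using xyz by simp
    ultimately show ?thesis by blast
  qed
next
  fix p assume "p \<in> (\<lambda>(y,z). (0,y,z)) ` A2 m \<union> (\<lambda>(x,y,z). (x+1,y,z)) ` A3 (m-2)"
  then show "p \<in> A3 m"
  proof
    assume "p \<in> (\<lambda>(y,z). (0,y,z)) ` A2 m" then show ?thesis unfolding A3_def by auto
  next
    assume "p \<in> (\<lambda>(x,y,z). (x+1,y,z)) ` A3 (m-2)"
    then obtain x y z where h: "(x,y,z) \<in> A3 (m-2)" "p = (x+1,y,z)" by auto
    have eq: "m - (2*x+2) = m - 2 - 2*x" by simp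
    show ?thesis using h unfolding A3_def by (simp add: eq)
  qed
qed

lemma card_A3_step: "card (A3 m) = card (A2 m) + card (A3 (m-2))"
proof -
  have "(\<lambda>(y,z). (0::int,y,z)) ` A2 m \<inter> (\<lambda>(x,y,z). (x+1,y,z)) ` A3 (m-2) = {}"
    unfolding A3_def by auto
  moreover have "inj_on (\<lambda>(x::int,y::int,z::int). (x+1,y,z)) (A3 (m-2))" by (auto simp: inj_on_def)
  moreover have "inj_on (\<lambda>(y::int,z::int). (0::int,y,z)) (A2 m)" by (auto simp: inj_on_def)
  ultimately show ?thesis
    by (subst A3_split) (simp add: card_Un_disjoint A2_fin A3_fin card_image)
qed

lemma card_A3: "6 * card (A3 (int n)) = (n+1)*(n+2)*(n+3)"
proof (induction n rule: less_induct)
  case (less n)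
  have s: "card (A3 (int n)) = card (A2 (int n)) + card (A3 (int n - 2))" by (rule card_A3_step)
  show ?case
  proof (cases "n \<ge> 2")
    case True
    define k where "k = n - 2"
    have k: "n = k + 2" using True unfolding k_def by simp
    have "int n - 2 = int k" using k by simp
    then have c3: "6 * card (A3 (int n - 2)) = (k+1)*(k+2)*(k+3)" using less.IH[of k] k by simp
    have c2: "card (A2 (int n)) = (k+3)^2" using card_A2[of n] k by simp
    have "6 * card (A3 (int n)) = 6 * (k+3)^2 + (k+1)*(k+2)*(k+3)" using s c2 c3 by simp
    also have "\<dots> = (n+1)*(n+2)*(n+3)" unfolding k by (simp add: power2_eq_square algebra_simps)
    finally show ?thesis .
  next
    case False
    then have "n = 0 \<or> n = 1" by auto
    then show ?thesis
    proof
      assume "n = 0" then show ?thesis using s card_A2[of 0] A3_neg[of "-2"] by simp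
    next
      assume "n = 1" then show ?thesis using s card_A2[of 1] A3_neg[of "-1"] by (simp add: power2_eq_square)
    qed
  qed
qed

lemma scale_mem: fixes y :: "'a::real_vector" and c :: real assumes "c \<noteq> 0"
  shows "y \<in> (\<lambda>x. c *\<^sub>R x) ` S \<longleftrightarrow> (inverse c) *\<^sub>R y \<in> S"
proof
  assume "y \<in> (\<lambda>x. c *\<^sub>R x) ` S"
  then obtain x where "x \<in> S" "y = c *\<^sub>R x" by auto
  moreover have "(inverse c) *\<^sub>R (c *\<^sub>R x) = x" using assms by simp
  ultimately show "(inverse c) *\<^sub>R y \<in> S" by simp
next
  assume "(inverse c) *\<^sub>R y \<in> S"
  moreover have "y = c *\<^sub>R ((inverse c) *\<^sub>R y)" using assms by simp
  ultimately show "y \<in> (\<lambda>x. c *\<^sub>R x) ` S" by blast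
qed

lemma div_iff: "(t::real) > 0 \<Longrightarrow> (0 \<le> a/t \<and> 0 \<le> b/t \<and> 0 \<le> c/t \<and> 2 * (a/t) + ca * (b/t) + cb * (c/t) \<le> 1)
   \<longleftrightarrow> (0 \<le> a \<and> 0 \<le> b \<and> 0 \<le> c \<and> 2 * a + ca * b + cb * c \<le> t)"
proof -
  assume tp: "t > 0"
  have e: "2 * (a / t) + ca * (b / t) + cb * (c / t) = (2 * a + ca * b + cb * c) / t"
    by (simp add: add_divide_distrib)
  show ?thesis unfolding e using tp by (simp add: zero_le_divide_iff pos_divide_le_eq)
qed

lemma set_eq: assumes "t > 0"
  shows "{p :: int \<times> int \<times> int. lattice_pt p \<in> (\<lambda>x. real t *\<^sub>R x) ` tetT} = A3 (int t)"
proof (intro set_eqI)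
  fix p :: "int \<times> int \<times> int"
  obtain x y z where xyz: "p = (x,y,z)" by (cases p) auto
  have tp: "real t > 0" using assms by simp
  have "lattice_pt p \<in> (\<lambda>x. real t *\<^sub>R x) ` tetT \<longleftrightarrow> inverse (real t) *\<^sub>R lattice_pt p \<in> tetT"
    using tp by (intro scale_mem) simp
  also have "\<dots> \<longleftrightarrow> 0 \<le> real_of_int x / real t \<and> 0 \<le> real_of_int y / real t \<and> 0 \<le> real_of_int z / real t
       \<and> 2 * (real_of_int x / real t) + ca * (real_of_int y / real t) + cb * (real_of_int z / real t) \<le> 1"
    unfolding tet_char xyz lattice_pt_def by (simp add: divide_inverse mult.commute)
  also have "\<dots> \<longleftrightarrow> 0 \<le> x \<and> 0 \<le> y \<and> 0 \<le> z
       \<and> 2 * real_of_int x + ca * real_of_int y + cb * real_of_int z \<le> real t"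
    using div_iff[OF tp, of "real_of_int x" "real_of_int y" "real_of_int z"] by (simp only: of_int_0_le_iff)
  also have "\<dots> \<longleftrightarrow> p \<in> A3 (int t)"
    unfolding A3_def A2_def xyz by auto
  finally show "p \<in> {p. lattice_pt p \<in> (\<lambda>x. real t *\<^sub>R x) ` tetT} \<longleftrightarrow> p \<in> A3 (int t)" by simp
qed

theorem proposition3p4:
  fixes t :: nat
  assumes "t > 0"
  shows "real (card {p :: int \<times> int \<times> int. lattice_pt p \<in> (\<lambda>x. real t *\<^sub>R x) ` tetT})
           = (1/6) * real t ^ 3 + real t ^ 2 + (11/6) * real t + 1"
proof -
  have "6 * real (card (A3 (int t))) = real ((t+1)*(t+2)*(t+3))"
  proof -
    have "real (6 * card (A3 (int t))) = real ((t+1)*(t+2)*(t+3))" by (simp only: card_A3)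
    then show ?thesis by (simp only: of_nat_mult of_nat_numeral)
  qed
  then have "real (card (A3 (int t))) = real ((t+1)*(t+2)*(t+3)) / 6" by simp
  also have "\<dots> = (1/6) * real t ^ 3 + real t ^ 2 + (11/6) * real t + 1"
  proof -
    have "real ((t+1)*(t+2)*(t+3)) = (real t+1)*(real t+2)*(real t+3)" by (simp only: of_nat_mult of_nat_add of_nat_1 of_nat_numeral)
    also have "\<dots> = real t ^ 3 + 6 * real t ^ 2 + 11 * real t + 6" by (simp add: algebra_simps power3_eq_cube power2_eq_square)
    finally show ?thesis by simp
  qed
  finally show ?thesis unfolding set_eq[OF assms] .
qed

end
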